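(* If $v_*$ is a minimizer of CQopt, then $(\lambda_*,u_* )$ with $u_*=Pv_*$ and $\lambda_*=\frac{1}{\gamma^2}u_*^{\top}(PAPu_*+b_0)$ is a minimizer of LGopt. Conversely, if $(\lambda_*,u_* )$ is a minimizer of LGopt, then $v_*=n_0+u_*$ is a minimizer of CQopt.
   Context: Let $A\in\mathbb{R}^{n\times n}$ be symmetric, $C\in\mathbb{R}^{n\times m}$ ($m<n$) full column rank, $b\in\mathbb{R}^m$, $n_0=C(C^{\top}C)^{-1}b$ with $\|n_0\|<1$, $\gamma=\sqrt{1-\|n_0\|^2}$, $P=I-C(C^{\top}C)^{-1}C^{\top}$ (orthogonal projector onto $\mathcal N(C^{\top})$), $b_0=PAn_0$. CQopt: minimize $v^{\top}PAPv+2v^{\top}b_0$ over $v\in n_0+\mathcal N(C^{\top})$ subject to $\|Pv\|=\gamma$. LGopt: minimize $\lambda$ over pairs $(\lambda,u)\in\mathbb{R}\times\mathbb{R}^n$ with $(PAP-\lambda I)u=-b_0$, $\|u\|=\gamma$, $u\in\mathcal N(C^{\top})$; a minimizer is a feasible pair with smallest $\lambda$. *)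

theory Defs
  imports "HOL-Analysis.Analysis"
begin

text \<open>Setting: A is n x n (real^'n^'n), C is n x m (real^'m^'n, rows indexed by 'n),
  b in R^m.  Vectors of R^n are real^'n.\<close>

definition projP :: "real^'m^'n \<Rightarrow> real^'n^'n" where
  "projP C = mat 1 - C ** matrix_inv (transpose C ** C) ** transpose C"

definition nvec0 :: "real^'m^'n \<Rightarrow> real^'m \<Rightarrow> real^'n" where
  "nvec0 C b = C *v (matrix_inv (transpose C ** C) *v b)"

definition gam :: "real^'m^'n \<Rightarrow> real^'m \<Rightarrow> real" where
  "gam C b = sqrt (1 - (norm (nvec0 C b))\<^sup>2)"

definition bvec0 :: "real^'n^'n \<Rightarrow> real^'m^'n \<Rightarrow> real^'m \<Rightarrow> real^'n" where
  "bvec0 A C b = projP C *v (A *v nvec0 C b)"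

text \<open>Objective of CQopt: v' PAP v + 2 v' b0.\<close>
definition cq_obj :: "real^'n^'n \<Rightarrow> real^'m^'n \<Rightarrow> real^'m \<Rightarrow> real^'n \<Rightarrow> real" where
  "cq_obj A C b v = v \<bullet> ((projP C ** A ** projP C) *v v) + 2 * (v \<bullet> bvec0 A C b)"

text \<open>Feasible set of CQopt: v \<in> n0 + N(C'), ||Pv|| = gamma.\<close>
definition cq_feasible :: "real^'m^'n \<Rightarrow> real^'m \<Rightarrow> real^'n \<Rightarrow> bool" where
  "cq_feasible C b v \<longleftrightarrow> transpose C *v (v - nvec0 C b) = 0 \<and> norm (projP C *v v) = gam C b"

definition cq_minimizer :: "real^'n^'n \<Rightarrow> real^'m^'n \<Rightarrow> real^'m \<Rightarrow> real^'n \<Rightarrow> bool" where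
  "cq_minimizer A C b v \<longleftrightarrow> cq_feasible C b v \<and>
     (\<forall>w. cq_feasible C b w \<longrightarrow> cq_obj A C b v \<le> cq_obj A C b w)"

text \<open>Feasible pairs of LGopt: (PAP - lambda I) u = -b0, ||u|| = gamma, u \<in> N(C').\<close>
definition lg_feasible :: "real^'n^'n \<Rightarrow> real^'m^'n \<Rightarrow> real^'m \<Rightarrow> real \<Rightarrow> real^'n \<Rightarrow> bool" where
  "lg_feasible A C b lam u \<longleftrightarrow>
     (projP C ** A ** projP C - lam *\<^sub>R mat 1) *v u = - bvec0 A C b \<and>
     norm u = gam C b \<and> transpose C *v u = 0"

definition lg_minimizer :: "real^'n^'n \<Rightarrow> real^'m^'n \<Rightarrow> real^'m \<Rightarrow> real \<Rightarrow> real^'n \<Rightarrow> bool" where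
  "lg_minimizer A C b lam u \<longleftrightarrow> lg_feasible A C b lam u \<and>
     (\<forall>mu w. lg_feasible A C b mu w \<longrightarrow> lam \<le> mu)"

end

theory Submission
  imports Defs
begin

lemma dot_sym_mat:
  fixes M :: "real^'n^'n"
  assumes "transpose M = M"
  shows "x \<bullet> (M *v y) = y \<bullet> (M *v x)"
proof -
  have "x \<bullet> (M *v y) = (x v* M) \<bullet> y" by (simp add: dot_lmul_matrix)
  also have "x v* M = transpose M *v x" by simp
  finally show ?thesis using assms by (simp add: inner_commute)
qed

lemma my_sub_ldistrib: "(A::real^'n^'m) ** (B - C) = A ** B - A ** C"
  by (vector matrix_matrix_mult_def sum_subtractf field_simps)

lemma my_sub_rdistrib: "((A::real^'n^'m) - B) ** C = A ** C - B ** C"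
  by (vector matrix_matrix_mult_def sum_subtractf field_simps)

lemma my_transpose_diff: "transpose ((A::real^'n^'m) - B) = transpose A - transpose B"
  by (simp add: transpose_def vec_eq_iff)

lemma gram_inv:
  fixes C :: "real^'m^'n"
  assumes rankC: "rank C = CARD('m)"
  shows "matrix_inv (transpose C ** C) ** (transpose C ** C) = mat 1"
    and "(transpose C ** C) ** matrix_inv (transpose C ** C) = mat 1"
    and "transpose (matrix_inv (transpose C ** C)) = matrix_inv (transpose C ** C)"
proof -
  let ?G = "transpose C ** C"
  have inj: "\<forall>x. C *v x = 0 \<longrightarrow> x = 0"
    using matrix_nonfull_linear_equations_eq[of C] rankC by auto
  have "\<forall>x. ?G *v x = 0 \<longrightarrow> x = 0"
  proof (intro allI impI)
    fix x assume "?G *v x = 0"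
    then have "x \<bullet> (?G *v x) = 0" by simp
    moreover have "x \<bullet> (?G *v x) = (C *v x) \<bullet> (C *v x)"
      using dot_lmul_matrix[of x "transpose C" "C *v x"]
      by (simp add: matrix_vector_mul_assoc[symmetric])
    ultimately have "C *v x = 0" by simp
    then show "x = 0" using inj by auto
  qed
  then have "invertible ?G"
    using matrix_left_invertible_ker invertible_left_inverse by blast
  then have "?G ** matrix_inv ?G = mat 1 \<and> matrix_inv ?G ** ?G = mat 1"
    unfolding invertible_def matrix_inv_def by (rule someI_ex)
  then show L: "matrix_inv ?G ** ?G = mat 1" and R: "?G ** matrix_inv ?G = mat 1" by auto
  have symG: "transpose ?G = ?G" by (simp add: matrix_transpose_mul)
  have "transpose (matrix_inv ?G) ** ?G = mat 1"
    by (metis R symG matrix_transpose_mul transpose_mat)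
  then have "transpose (matrix_inv ?G) = transpose (matrix_inv ?G) ** (?G ** matrix_inv ?G)"
    using R by simp
  also have "\<dots> = matrix_inv ?G"
    by (metis \<open>transpose (matrix_inv ?G) ** ?G = mat 1\<close> matrix_mul_assoc matrix_mul_lid)
  finally show "transpose (matrix_inv ?G) = matrix_inv ?G" .
qed

lemma projP_facts:
  fixes C :: "real^'m^'n"
  assumes rankC: "rank C = CARD('m)"
  shows "transpose (projP C) = projP C"
    and "transpose C *v (projP C *v x) = 0"
    and "transpose C *v u = 0 \<Longrightarrow> projP C *v u = u"
    and "projP C *v nvec0 C b = 0"
proof -
  let ?G = "transpose C ** C"
  let ?Gi = "matrix_inv ?G"
  note g = gram_inv[OF rankC]
  show "transpose (projP C) = projP C"
    unfolding projP_def using g(3)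
    by (simp add: my_transpose_diff matrix_transpose_mul matrix_mul_assoc)
  have "transpose C ** projP C = 0"
    unfolding projP_def
    by (simp add: my_sub_ldistrib matrix_mul_assoc g(2))
  then show "transpose C *v (projP C *v x) = 0"
    by (simp add: matrix_vector_mul_assoc)
  show "transpose C *v u = 0 \<Longrightarrow> projP C *v u = u"
    unfolding projP_def
    by (simp add: matrix_vector_mult_diff_rdistrib matrix_vector_mul_assoc[symmetric])
  have "projP C ** C = 0"
    unfolding projP_def
    by (simp add: my_sub_rdistrib matrix_mul_assoc[symmetric] g(1))
  then show "projP C *v nvec0 C b = 0"
    unfolding nvec0_def by (simp add: matrix_vector_mul_assoc matrix_mul_assoc)
qed


lemma stat_identity:
  fixes M :: "real^'n^'n"
  assumes sym: "transpose M = M" and s1: "M *v u1 + b = l1 *\<^sub>R u1"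
    and s2: "M *v u2 + b = l2 *\<^sub>R u2" and nn: "norm u1 = norm u2"
  shows "(u2 \<bullet> (M *v u2) + 2*(u2 \<bullet> b)) - (u1 \<bullet> (M *v u1) + 2*(u1 \<bullet> b))
         = (l2 - l1)/2 * (norm (u2 - u1))^2"
proof -
  have e11: "u1 \<bullet> (M *v u1) + u1 \<bullet> b = l1 * (u1 \<bullet> u1)"
    using arg_cong[OF s1, of "\<lambda>z. u1 \<bullet> z"] by (simp add: inner_add_right)
  have e21: "u2 \<bullet> (M *v u1) + u2 \<bullet> b = l1 * (u2 \<bullet> u1)"
    using arg_cong[OF s1, of "\<lambda>z. u2 \<bullet> z"] by (simp add: inner_add_right)
  have e12: "u1 \<bullet> (M *v u2) + u1 \<bullet> b = l2 * (u1 \<bullet> u2)"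
    using arg_cong[OF s2, of "\<lambda>z. u1 \<bullet> z"] by (simp add: inner_add_right)
  have e22: "u2 \<bullet> (M *v u2) + u2 \<bullet> b = l2 * (u2 \<bullet> u2)"
    using arg_cong[OF s2, of "\<lambda>z. u2 \<bullet> z"] by (simp add: inner_add_right)
  have sy: "u2 \<bullet> (M *v u1) = u1 \<bullet> (M *v u2)" using dot_sym_mat[OF sym] by blast
  have nc: "u2 \<bullet> u1 = u1 \<bullet> u2" by (simp add: inner_commute)
  have n: "u2 \<bullet> u2 = u1 \<bullet> u1" using nn by (metis power2_norm_eq_inner)
  have nd: "(norm (u2 - u1))^2 = u2 \<bullet> u2 - 2 * (u1 \<bullet> u2) + u1 \<bullet> u1"
    by (simp add: power2_norm_eq_inner inner_diff_left inner_diff_right inner_commute)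
  define N where "N = u1 \<bullet> u1"
  define c where "c = u1 \<bullet> u2"
  have e21': "u2 \<bullet> (M *v u1) + u2 \<bullet> b = l1 * c" using e21 nc unfolding c_def by simp
  have e12': "u1 \<bullet> (M *v u2) + u1 \<bullet> b = l2 * c" using e12 unfolding c_def by simp
  have c21: "u2 \<bullet> b - u1 \<bullet> b = l1 * c - l2 * c"
    using e21' e12' sy by linarith
  have "(u2 \<bullet> (M *v u2) + 2*(u2 \<bullet> b)) - (u1 \<bullet> (M *v u1) + 2*(u1 \<bullet> b))
     = l2 * N - l1 * N + (u2 \<bullet> b - u1 \<bullet> b)"
  proof -
    have e22': "u2 \<bullet> (M *v u2) + u2 \<bullet> b = l2 * N" using e22 n unfolding N_def by simp
    have e11': "u1 \<bullet> (M *v u1) + u1 \<bullet> b = l1 * N" using e11 unfolding N_def by simp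
    show ?thesis using e11' e22' by linarith
  qed
  also have "\<dots> = (l2 - l1) * (N - c)" using c21 by (simp add: algebra_simps)
  also have "\<dots> = (l2 - l1)/2 * (2*N - 2*c)" by (simp add: field_simps)
  also have "2*N - 2*c = (norm (u2 - u1))^2" using nd n unfolding N_def c_def by linarith
  finally show ?thesis .
qed

lemma lagrange:
  fixes M :: "real^'n^'n" and K :: "real^'n^'m"
  assumes sym: "transpose M = M" and gpos: "g > 0" and uK: "K *v u = 0" and nu: "norm u = g"
    and gK: "K *v (M *v u + b) = 0"
    and minu: "\<forall>w. K *v w = 0 \<longrightarrow> norm w = g \<longrightarrow>
        u \<bullet> (M *v u) + 2*(u \<bullet> b) \<le> w \<bullet> (M *v w) + 2*(w \<bullet> b)"
  shows "M *v u + b = ((u \<bullet> (M *v u + b)) / g^2) *\<^sub>R u"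
proof -
  have uu: "u \<bullet> u = g^2" using nu by (metis power2_norm_eq_inner)
  have step1: "e \<bullet> (M *v u + b) = 0"
    if eK: "K *v e = 0" and eu: "e \<bullet> u = 0" and ne: "norm e = g" for e
  proof -
    have ee: "e \<bullet> e = g^2" using ne by (metis power2_norm_eq_inner)
    define a where "a = u \<bullet> (M *v u)"
    define p where "p = u \<bullet> (M *v e)"
    define q where "q = e \<bullet> (M *v e)"
    define be where "be = u \<bullet> b"
    define de where "de = e \<bullet> b"
    define \<phi> where "\<phi> = (\<lambda>t::real. (cos t)^2 * a + 2 * cos t * sin t * p + (sin t)^2 * q
        + 2 * cos t * be + 2 * sin t * de)"
    have sy: "e \<bullet> (M *v u) = p" unfolding p_def using dot_sym_mat[OF sym] by blast
    have phi_eq: "\<phi> t = (cos t *\<^sub>R u + sin t *\<^sub>R e) \<bullet> (M *v (cos t *\<^sub>R u + sin t *\<^sub>R e))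
        + 2 * ((cos t *\<^sub>R u + sin t *\<^sub>R e) \<bullet> b)" for t
      unfolding \<phi>_def a_def p_def q_def be_def de_def
      using dot_sym_mat[OF sym, of e u] by (simp add: inner_add_left inner_add_right matrix_vector_right_distrib
          matrix_vector_mult_scaleR power2_eq_square algebra_simps)
    have feas: "K *v (cos t *\<^sub>R u + sin t *\<^sub>R e) = 0 \<and> norm (cos t *\<^sub>R u + sin t *\<^sub>R e) = g" for t
    proof
      show "K *v (cos t *\<^sub>R u + sin t *\<^sub>R e) = 0"
        using uK eK by (simp add: matrix_vector_right_distrib matrix_vector_mult_scaleR)
      have "(norm (cos t *\<^sub>R u + sin t *\<^sub>R e))^2 = (cos t)^2 * g^2 + (sin t)^2 * g^2"
        using uu ee eu unfolding power2_norm_eq_inner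
        by (simp add: inner_add_left inner_add_right inner_commute[of u e] power2_eq_square algebra_simps)
      also have "\<dots> = g^2 * ((cos t)^2 + (sin t)^2)" by (simp only: distrib_left mult.commute)
      also have "\<dots> = g^2" by simp
      finally show "norm (cos t *\<^sub>R u + sin t *\<^sub>R e) = g"
        using gpos by (simp add: power2_eq_iff_nonneg)
    qed
    have min: "\<forall>t. \<bar>0 - t\<bar> < 1 \<longrightarrow> \<phi> 0 \<le> \<phi> t"
    proof (intro allI impI)
      fix t
      have "\<phi> 0 = u \<bullet> (M *v u) + 2*(u \<bullet> b)" using phi_eq[of 0] by simp
      also have "\<dots> \<le> \<phi> t" using minu feas[of t] phi_eq[of t] by auto
      finally show "\<phi> 0 \<le> \<phi> t" .
    qed
    have "DERIV \<phi> 0 :> (2 * p + 2 * de)"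
      unfolding \<phi>_def by (auto intro!: derivative_eq_intros)
    then have "2 * p + 2 * de = 0" using DERIV_local_min[OF _ _ min] by auto
    then show ?thesis using sy unfolding de_def by (simp add: inner_add_right)
  qed
  have step2: "e \<bullet> (M *v u + b) = 0" if eK: "K *v e = 0" and eu: "e \<bullet> u = 0" for e
  proof (cases "e = 0")
    case True then show ?thesis by simp
  next
    case False
    define e' where "e' = (g / norm e) *\<^sub>R e"
    have "K *v e' = 0" unfolding e'_def using eK by (simp add: matrix_vector_mult_scaleR)
    moreover have "e' \<bullet> u = 0" unfolding e'_def using eu by simp
    moreover have "norm e' = g" unfolding e'_def using False gpos by simp
    ultimately have "e' \<bullet> (M *v u + b) = 0" by (rule step1)
    then show ?thesis unfolding e'_def using False gpos by simp
  qed
  define G where "G = M *v u + b"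
  define l where "l = (u \<bullet> G) / g^2"
  define h where "h = G - l *\<^sub>R u"
  have hK: "K *v h = 0" unfolding h_def G_def using gK uK
    by (simp add: matrix_vector_mult_diff_distrib matrix_vector_mult_scaleR)
  have hu: "h \<bullet> u = 0"
  proof -
    have "h \<bullet> u = u \<bullet> G - l * (u \<bullet> u)" unfolding h_def
      by (simp add: inner_diff_left inner_commute[of u G])
    also have "\<dots> = 0" unfolding l_def uu using gpos by simp
    finally show ?thesis .
  qed
  have hG: "h \<bullet> G = 0" using step2[OF hK hu] unfolding G_def .
  have "h \<bullet> h = 0" using hG hu unfolding h_def by (simp add: inner_diff_right)
  then have "h = 0" by simp
  then show ?thesis unfolding h_def l_def G_def by simp
qed


theorem theorem2p2:
  fixes A :: "real^'n^'n" and C :: "real^'m^'n" and b :: "real^'m"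
  assumes symA: "transpose A = A"
    and mn: "CARD('m) < CARD('n)"
    and rankC: "rank C = CARD('m)"
    and n0: "norm (nvec0 C b) < 1"
  shows "(\<forall>v. cq_minimizer A C b v \<longrightarrow>
            (let u = projP C *v v in
             lg_minimizer A C b
               ((1 / (gam C b)\<^sup>2) * (u \<bullet> ((projP C ** A ** projP C) *v u + bvec0 A C b))) u))
       \<and> (\<forall>lam u. lg_minimizer A C b lam u \<longrightarrow> cq_minimizer A C b (nvec0 C b + u))"
proof -
  define K where "K = transpose C"
  define P where "P = projP C"
  define M where "M = P ** A ** P"
  define b0 where "b0 = bvec0 A C b"
  define nn where "nn = nvec0 C b"
  define g where "g = gam C b"
  define F where "F = (\<lambda>w. w \<bullet> (M *v w) + 2 * (w \<bullet> b0))"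
  note pf = projP_facts[OF rankC]
  have symP: "transpose P = P" unfolding P_def using pf(1) .
  have PK: "K *v (P *v x) = 0" for x unfolding K_def P_def using pf(2) .
  have Pfix: "K *v u = 0 \<Longrightarrow> P *v u = u" for u unfolding K_def P_def using pf(3) .
  have Pn0: "P *v nn = 0" unfolding P_def nn_def using pf(4) .
  have gpos: "g > 0"
  proof -
    have "(norm nn)^2 < 1" using n0 unfolding nn_def
      by (metis norm_ge_zero power_strict_mono one_power2 zero_less_numeral)
    then show ?thesis unfolding g_def gam_def nn_def[symmetric] by simp
  qed
  have symM: "transpose M = M" unfolding M_def
    by (simp add: matrix_transpose_mul symP symA matrix_mul_assoc)
  have Mv: "M *v x = P *v (A *v (P *v x))" for x
    unfolding M_def by (simp add: matrix_vector_mul_assoc matrix_mul_assoc)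
  have MK: "K *v (M *v x) = 0" for x using Mv PK by simp
  have b0v: "b0 = P *v (A *v nn)" unfolding b0_def bvec0_def P_def nn_def ..
  have b0K: "K *v b0 = 0" using b0v PK by simp
  have Mn0: "M *v nn = 0" using Mv Pn0 by simp
  have n0b0: "nn \<bullet> b0 = 0" using b0v dot_sym_mat[OF symP, of nn "A *v nn"] Pn0 by simp
  have obj: "cq_obj A C b (nn + u) = F u" if "K *v u = 0" for u
  proof -
    have "nn \<bullet> (M *v u) = 0" using dot_sym_mat[OF symM, of nn u] Mn0 by simp
    then show ?thesis unfolding cq_obj_def F_def M_def[symmetric] P_def[symmetric] b0_def[symmetric]
      using n0b0 Mn0 by (simp add: matrix_vector_right_distrib inner_add_left inner_add_right)
  qed
  have feas: "cq_feasible C b v \<longleftrightarrow> K *v (v - nn) = 0 \<and> norm (v - nn) = g" for v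
  proof -
    have "K *v (v - nn) = 0 \<Longrightarrow> P *v v = v - nn"
      using Pfix[of "v - nn"] Pn0 by (simp add: matrix_vector_mult_diff_distrib)
    then show ?thesis unfolding cq_feasible_def K_def[symmetric] nn_def[symmetric] g_def[symmetric]
      P_def[symmetric] by auto
  qed
  have lgfeas: "lg_feasible A C b l u \<longleftrightarrow> M *v u + b0 = l *\<^sub>R u \<and> norm u = g \<and> K *v u = 0" for l u
  proof -
    have "(M - l *\<^sub>R mat 1) *v u = M *v u - l *\<^sub>R u"
      by (simp add: matrix_vector_mult_diff_rdistrib scaleR_matrix_vector_assoc[symmetric])
    then show ?thesis unfolding lg_feasible_def M_def[symmetric] P_def[symmetric] b0_def[symmetric]
      K_def[symmetric] g_def[symmetric]
      by (auto simp: algebra_simps eq_neg_iff_add_eq_0)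
  qed
  have part1: "lg_minimizer A C b ((1 / g^2) * (u \<bullet> (M *v u + b0))) u"
    if minu: "\<forall>w. K *v w = 0 \<longrightarrow> norm w = g \<longrightarrow> F u \<le> F w" and uK: "K *v u = 0"
      and nu: "norm u = g" for u
  proof -
    define l where "l = (1 / g^2) * (u \<bullet> (M *v u + b0))"
    have st: "M *v u + b0 = l *\<^sub>R u"
      using lagrange[OF symM gpos uK nu, of b0] MK b0K minu unfolding F_def l_def
      by (simp add: matrix_vector_right_distrib)
    have "lg_feasible A C b l u" using lgfeas st nu uK by simp
    moreover have "l \<le> mu" if "lg_feasible A C b mu w" for mu w
    proof -
      have sw: "M *v w + b0 = mu *\<^sub>R w" and nw: "norm w = g" and wK: "K *v w = 0"
        using that lgfeas by auto
      have id: "F w - F u = (mu - l)/2 * (norm (w - u))^2"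
        using stat_identity[OF symM st sw] nu nw unfolding F_def by simp
      have le: "F u \<le> F w" using minu wK nw by simp
      show ?thesis
      proof (cases "w = u")
        case True
        then have "(mu - l) *\<^sub>R u = 0" using st sw by (auto simp: algebra_simps)
        moreover have "u \<noteq> 0" using nu gpos by auto
        ultimately show ?thesis by simp
      next
        case False
        then have "(norm (w - u))^2 > 0" by simp
        moreover have "(mu - l)/2 * (norm (w - u))^2 \<ge> 0" using id le by simp
        ultimately have "(mu - l)/2 \<ge> 0" by (simp add: zero_le_mult_iff)
        then show ?thesis by simp
      qed
    qed
    ultimately show ?thesis unfolding lg_minimizer_def l_def by blast
  qed
  have P1: "\<forall>v. cq_minimizer A C b v \<longrightarrow>
            (let u = projP C *v v in
             lg_minimizer A C b
               ((1 / (gam C b)\<^sup>2) * (u \<bullet> ((projP C ** A ** projP C) *v u + bvec0 A C b))) u)"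
  proof (intro allI impI)
    fix v assume cm: "cq_minimizer A C b v"
    then have fv: "K *v (v - nn) = 0" "norm (v - nn) = g"
      using feas unfolding cq_minimizer_def by auto
    have Pv: "P *v v = v - nn"
      using Pfix[OF fv(1)] Pn0 by (simp add: matrix_vector_mult_diff_distrib)
    have minu: "\<forall>w. K *v w = 0 \<longrightarrow> norm w = g \<longrightarrow> F (v - nn) \<le> F w"
    proof (intro allI impI)
      fix w assume "K *v w = 0" "norm w = g"
      then have "cq_feasible C b (nn + w)" using feas by simp
      then have "cq_obj A C b v \<le> cq_obj A C b (nn + w)" using cm unfolding cq_minimizer_def by blast
      moreover have "cq_obj A C b v = F (v - nn)" using obj[OF fv(1)] by simp
      ultimately show "F (v - nn) \<le> F w" using obj \<open>K *v w = 0\<close> by simp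
    qed
    show "let u = projP C *v v in
             lg_minimizer A C b
               ((1 / (gam C b)\<^sup>2) * (u \<bullet> ((projP C ** A ** projP C) *v u + bvec0 A C b))) u"
      using part1[OF minu fv] Pv unfolding Let_def P_def[symmetric] M_def[symmetric]
        b0_def[symmetric] g_def[symmetric] by simp
  qed
  define S where "S = {w. K *v w = 0 \<and> norm w = g}"
  have Sne: "S \<noteq> {}"
  proof -
    have "rank K = CARD('m)" unfolding K_def using rankC rank_transpose by metis
    then have "rank K \<noteq> CARD('n)" using mn by simp
    then obtain x where x: "x \<noteq> 0" "K *v x = 0"
      using matrix_nonfull_linear_equations_eq[of K] by auto
    define y where "y = (g / norm x) *\<^sub>R x"
    have "K *v y = 0" unfolding y_def using x by (simp add: matrix_vector_mult_scaleR)
    moreover have "norm y = g" unfolding y_def using x gpos by simp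
    ultimately show ?thesis unfolding S_def by blast
  qed
  have Scomp: "compact S"
  unfolding compact_eq_bounded_closed
  proof
    show "bounded S" unfolding S_def bounded_iff by auto
    have c1: "closed {w. K *v w = 0}"
      by (intro closed_Collect_eq continuous_intros)
    have c2: "closed {w :: real^'n. norm w = g}"
      by (intro closed_Collect_eq continuous_intros)
    have "S = {w. K *v w = 0} \<inter> {w. norm w = g}" unfolding S_def by auto
    then show "closed S" using c1 c2 by auto
  qed
  have Fcont: "continuous_on S F"
    unfolding F_def
    by (intro continuous_intros bounded_linear.continuous_on[OF matrix_vector_mul_bounded_linear])
  obtain us where us: "us \<in> S" and usmin: "\<forall>w\<in>S. F us \<le> F w"
    using continuous_attains_inf[OF Scomp Sne Fcont] by blast
  have P2: "\<forall>lam u. lg_minimizer A C b lam u \<longrightarrow> cq_minimizer A C b (nvec0 C b + u)"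
  proof (intro allI impI)
    fix lam u assume lm: "lg_minimizer A C b lam u"
    then have su: "M *v u + b0 = lam *\<^sub>R u" and nu: "norm u = g" and uK: "K *v u = 0"
      using lgfeas unfolding lg_minimizer_def by auto
    have usK: "K *v us = 0" and nus: "norm us = g" using us unfolding S_def by auto
    have minus: "\<forall>w. K *v w = 0 \<longrightarrow> norm w = g \<longrightarrow> F us \<le> F w" using usmin unfolding S_def by auto
    have lmin: "lg_minimizer A C b ((1 / g^2) * (us \<bullet> (M *v us + b0))) us"
      using part1[OF minus usK nus] .
    define ls where "ls = (1 / g^2) * (us \<bullet> (M *v us + b0))"
    have sus: "M *v us + b0 = ls *\<^sub>R us" using lmin lgfeas unfolding lg_minimizer_def ls_def by auto
    have "lg_feasible A C b ls us" using lmin unfolding lg_minimizer_def ls_def by auto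
    then have "lam \<le> ls" using lm unfolding lg_minimizer_def by blast
    moreover have "F u - F us = (lam - ls)/2 * (norm (u - us))^2"
      using stat_identity[OF symM sus su] nu nus unfolding F_def by simp
    moreover have "(lam - ls)/2 * (norm (u - us))^2 \<le> 0"
      using \<open>lam \<le> ls\<close> by (intro mult_nonpos_nonneg) auto
    ultimately have "F u - F us \<le> 0" by linarith
    then have Fu: "F u \<le> F w" if "w \<in> S" for w using usmin that by force
    show "cq_minimizer A C b (nvec0 C b + u)"
      unfolding cq_minimizer_def nn_def[symmetric]
    proof
      show "cq_feasible C b (nn + u)" using feas uK nu by simp
      show "\<forall>w. cq_feasible C b w \<longrightarrow> cq_obj A C b (nn + u) \<le> cq_obj A C b w"
      proof (intro allI impI)
        fix w assume "cq_feasible C b w"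
        then have wS: "w - nn \<in> S" using feas unfolding S_def by auto
        then have "cq_obj A C b w = F (w - nn)" using obj[of "w - nn"] unfolding S_def by simp
        then show "cq_obj A C b (nn + u) \<le> cq_obj A C b w" using obj[OF uK] Fu[OF wS] by simp
      qed
    qed
  qed
  show ?thesis using P1 P2 by blast
qed

end
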